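(* The partially ordered set $(\mathcal{C}_{m,n},\le)$ is a lattice.
   Context: $\mathcal{C}_{m,n}$ is the set of all convex $m\times n$ $(0,1)$-matrices (matrices in which the 1's in every row and every column occur consecutively), and $\le$ is the entrywise partial order. *)

theory Defs
  imports Main
begin

text \<open>An m x n (0,1)-matrix is represented as a function nat => nat => bool
  (True = entry 1) whose entries vanish outside the index range {0..<m} x {0..<n}.\<close>

type_synonym bmat = "nat \<Rightarrow> nat \<Rightarrow> bool"

definition convex_matrices :: "nat \<Rightarrow> nat \<Rightarrow> bmat set" where
  "convex_matrices m n = {A.
     (\<forall>i j. A i j \<longrightarrow> i < m \<and> j < n) \<and>
     (\<forall>i j1 j2 j. A i j1 \<and> A i j2 \<and> j1 \<le> j \<and> j \<le> j2 \<longrightarrow> A i j) \<and>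
     (\<forall>j i1 i2 i. A i1 j \<and> A i2 j \<and> i1 \<le> i \<and> i \<le> i2 \<longrightarrow> A i j)}"

definition mat_le :: "bmat \<Rightarrow> bmat \<Rightarrow> bool" where
  "mat_le A B \<longleftrightarrow> (\<forall>i j. A i j \<longrightarrow> B i j)"

definition is_lub_in :: "bmat set \<Rightarrow> bmat \<Rightarrow> bmat \<Rightarrow> bmat \<Rightarrow> bool" where
  "is_lub_in S A B J \<longleftrightarrow> J \<in> S \<and> mat_le A J \<and> mat_le B J \<and>
     (\<forall>U\<in>S. mat_le A U \<and> mat_le B U \<longrightarrow> mat_le J U)"

definition is_glb_in :: "bmat set \<Rightarrow> bmat \<Rightarrow> bmat \<Rightarrow> bmat \<Rightarrow> bool" where
  "is_glb_in S A B M \<longleftrightarrow> M \<in> S \<and> mat_le M A \<and> mat_le M B \<and>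
     (\<forall>L\<in>S. mat_le L A \<and> mat_le L B \<longrightarrow> mat_le L M)"

end

theory Submission
  imports Defs
begin

lemma cm_iff: "A \<in> convex_matrices m n \<longleftrightarrow>
     (\<forall>i j. A i j \<longrightarrow> i < m \<and> j < n) \<and>
     (\<forall>i j1 j2 j. A i j1 \<and> A i j2 \<and> j1 \<le> j \<and> j \<le> j2 \<longrightarrow> A i j) \<and>
     (\<forall>j i1 i2 i. A i1 j \<and> A i2 j \<and> i1 \<le> i \<and> i \<le> i2 \<longrightarrow> A i j)"
  unfolding convex_matrices_def by simp

lemma cmI:
  assumes "\<And>i j. A i j \<Longrightarrow> i < m \<and> j < n"
    "\<And>i j1 j2 j. A i j1 \<Longrightarrow> A i j2 \<Longrightarrow> j1 \<le> j \<Longrightarrow> j \<le> j2 \<Longrightarrow> A i j"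
    "\<And>j i1 i2 i. A i1 j \<Longrightarrow> A i2 j \<Longrightarrow> i1 \<le> i \<Longrightarrow> i \<le> i2 \<Longrightarrow> A i j"
  shows "A \<in> convex_matrices m n"
  using assms unfolding cm_iff by blast

lemma cmD:
  assumes "A \<in> convex_matrices m n"
  shows "\<And>i j. A i j \<Longrightarrow> i < m \<and> j < n"
    "\<And>i j1 j2 j. A i j1 \<Longrightarrow> A i j2 \<Longrightarrow> j1 \<le> j \<Longrightarrow> j \<le> j2 \<Longrightarrow> A i j"
    "\<And>j i1 i2 i. A i1 j \<Longrightarrow> A i2 j \<Longrightarrow> i1 \<le> i \<Longrightarrow> i \<le> i2 \<Longrightarrow> A i j"
  using assms unfolding cm_iff by blast+

lemma full_in: "(\<lambda>i j. i < m \<and> j < n) \<in> convex_matrices m n"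
  by (rule cmI) auto

lemma meet_in:
  assumes A: "A \<in> convex_matrices m n" and B: "B \<in> convex_matrices m n"
  shows "(\<lambda>i j. A i j \<and> B i j) \<in> convex_matrices m n"
proof (rule cmI)
  show "\<And>i j. A i j \<and> B i j \<Longrightarrow> i < m \<and> j < n" using cmD(1)[OF A] by blast
  show "\<And>i j1 j2 j. A i j1 \<and> B i j1 \<Longrightarrow> A i j2 \<and> B i j2 \<Longrightarrow> j1 \<le> j \<Longrightarrow> j \<le> j2 \<Longrightarrow> A i j \<and> B i j"
    using cmD(2)[OF A] cmD(2)[OF B] by blast
  show "\<And>j i1 i2 i. A i1 j \<and> B i1 j \<Longrightarrow> A i2 j \<and> B i2 j \<Longrightarrow> i1 \<le> i \<Longrightarrow> i \<le> i2 \<Longrightarrow> A i j \<and> B i j"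
    using cmD(3)[OF A] cmD(3)[OF B] by blast
qed

lemma inter_in:
  assumes F: "F \<in> convex_matrices m n" and PF: "P F"
  shows "(\<lambda>i j. \<forall>U\<in>convex_matrices m n. P U \<longrightarrow> U i j) \<in> convex_matrices m n"
proof (rule cmI)
  fix i j assume "\<forall>U\<in>convex_matrices m n. P U \<longrightarrow> U i j"
  then have "F i j" using F PF by blast
  then show "i < m \<and> j < n" using cmD(1)[OF F] by blast
next
  fix i j1 j2 j assume h1: "\<forall>U\<in>convex_matrices m n. P U \<longrightarrow> U i j1"
    and h2: "\<forall>U\<in>convex_matrices m n. P U \<longrightarrow> U i j2" and "j1 \<le> j" "j \<le> j2"
  show "\<forall>U\<in>convex_matrices m n. P U \<longrightarrow> U i j"
  proof (intro ballI impI)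
    fix U assume U: "U \<in> convex_matrices m n" "P U"
    show "U i j" using cmD(2)[OF U(1)] h1 h2 U \<open>j1 \<le> j\<close> \<open>j \<le> j2\<close> by blast
  qed
next
  fix j i1 i2 i assume h1: "\<forall>U\<in>convex_matrices m n. P U \<longrightarrow> U i1 j"
    and h2: "\<forall>U\<in>convex_matrices m n. P U \<longrightarrow> U i2 j" and "i1 \<le> i" "i \<le> i2"
  show "\<forall>U\<in>convex_matrices m n. P U \<longrightarrow> U i j"
  proof (intro ballI impI)
    fix U assume U: "U \<in> convex_matrices m n" "P U"
    show "U i j" using cmD(3)[OF U(1)] h1 h2 U \<open>i1 \<le> i\<close> \<open>i \<le> i2\<close> by blast
  qed
qed

theorem mainTheorem12:
  fixes m n :: nat
  shows "\<forall>A\<in>convex_matrices m n. \<forall>B\<in>convex_matrices m n.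
           (\<exists>J. is_lub_in (convex_matrices m n) A B J) \<and>
           (\<exists>M. is_glb_in (convex_matrices m n) A B M)"
proof (intro ballI conjI)
  fix A B assume A: "A \<in> convex_matrices m n" and B: "B \<in> convex_matrices m n"
  define P where "P = (\<lambda>U. mat_le A U \<and> mat_le B U)"
  define J where "J = (\<lambda>i j. \<forall>U\<in>convex_matrices m n. P U \<longrightarrow> U i j)"
  have F: "P (\<lambda>i j. i < m \<and> j < n)"
    using cmD(1)[OF A] cmD(1)[OF B] unfolding P_def mat_le_def by blast
  have Jin: "J \<in> convex_matrices m n"
    unfolding J_def by (rule inter_in[where P=P, OF full_in F])
  have "is_lub_in (convex_matrices m n) A B J"
    unfolding is_lub_in_def
  proof (intro conjI ballI impI)
    show "J \<in> convex_matrices m n" by (rule Jin)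
    show "mat_le A J" unfolding mat_le_def J_def P_def by simp
    show "mat_le B J" unfolding mat_le_def J_def P_def by simp
    fix U assume "U \<in> convex_matrices m n" "mat_le A U \<and> mat_le B U"
    then show "mat_le J U" unfolding J_def P_def using mat_le_def by auto
  qed
  then show "\<exists>J. is_lub_in (convex_matrices m n) A B J" by blast
  have "is_glb_in (convex_matrices m n) A B (\<lambda>i j. A i j \<and> B i j)"
    using meet_in[OF A B] unfolding is_glb_in_def mat_le_def by simp
  then show "\<exists>M. is_glb_in (convex_matrices m n) A B M" by blast
qed

end
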